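(* Let $n\ge 2$ and let $V\subset\mathbb{R}^n$ be a finite set containing no two parallel vectors. Let $T\subset\mathbb{R}^n$ be a closed set which is $V$-closed, and let $C=\operatorname{cl}\operatorname{conv} T$ be the closure of the convex hull of $T$. If $x$ is an extreme point of $C$, then there is a vector $t\in\mathbb{R}^n$ such that $x\in t+P(V)\subset C$.
   Context: For a finite set $V\subset\mathbb{R}^n$, a set $T\subset\mathbb{R}^n$ is called $V$-closed if for every $t\in T$ and every $v\in V$, at least one of $t+v$ and $t-v$ lies in $T$. The set $P(V)$ is $P(V)=\{\sum_{v\in W} v : W\subseteq V\}$ (the set of all subset sums of $V$). A point $x$ of a convex set $C$ is an extreme point if there are no two distinct points $x_0,x_1\in C$ with $x$ in the open segment between them. *)

theory Defs
  imports "HOL-Analysis.Analysis"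
begin

definition V_closed :: "('a::real_vector) set \<Rightarrow> 'a set \<Rightarrow> bool" where
  "V_closed V T \<longleftrightarrow> (\<forall>t\<in>T. \<forall>v\<in>V. t + v \<in> T \<or> t - v \<in> T)"

definition subset_sums :: "('a::real_vector) set \<Rightarrow> 'a set" where
  "subset_sums V = {\<Sum>v\<in>W. v | W. W \<subseteq> V}"

definition parallel :: "('a::real_vector) \<Rightarrow> 'a \<Rightarrow> bool" where
  "parallel u v \<longleftrightarrow> (\<exists>c::real. u = c *\<^sub>R v \<or> v = c *\<^sub>R u)"

end

theory Submission
  imports Defs
begin

lemma finite_pos_lb:
  fixes P :: "'i \<Rightarrow> real"
  assumes "finite I" "\<And>i. i \<in> I \<Longrightarrow> P i > 0"
  shows "\<exists>e>0. \<forall>i\<in>I. e \<le> P i"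
proof -
  let ?e = "Min (insert 1 (P ` I))"
  have "?e > 0" using assms by (subst Min_gr_iff) auto
  moreover have "\<forall>i\<in>I. ?e \<le> P i" using assms by (auto intro: Min_le)
  ultimately show ?thesis by blast
qed

lemma approx_max:
  fixes h :: "'a \<Rightarrow> real"
  assumes "\<And>t. t \<in> T \<Longrightarrow> h t \<le> B" "T \<noteq> {}" "\<epsilon> > 0"
  shows "\<exists>t\<in>T. \<forall>s\<in>T. h s \<le> h t + \<epsilon>"
proof -
  have bdd: "bdd_above (h ` T)" using assms(1) by (rule bdd_above.I2)
  let ?S = "Sup (h ` T)"
  have "?S - \<epsilon> < ?S" using assms by simp
  then obtain t where t: "t \<in> T" "?S - \<epsilon> < h t"
    using less_cSUP_iff[OF assms(2) bdd] by blast
  have "\<forall>s\<in>T. h s \<le> ?S" using bdd by (auto intro: cSUP_upper)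
  with t show ?thesis by force
qed

definition ratio :: "'a::real_inner \<Rightarrow> 'a \<Rightarrow> 'a \<Rightarrow> real" where
  "ratio f g d = - inner f d / inner g d"

lemma param:
  fixes T :: "'a::real_inner set" and f g :: 'a and dd :: "'i \<Rightarrow> 'a" and I :: "'i set"
  assumes fin: "finite I"
    and mv: "\<And>t i. t \<in> T \<Longrightarrow> i \<in> I \<Longrightarrow> t + dd i \<in> T \<or> t - dd i \<in> T"
    and bf: "\<And>t. t \<in> T \<Longrightarrow> inner f t \<le> Bf" and bg: "\<And>t. t \<in> T \<Longrightarrow> inner g t \<le> Bg"
    and pos: "\<And>i. i \<in> I \<Longrightarrow> inner g (dd i) > 0"
    and inj: "inj_on (\<lambda>i. ratio f g (dd i)) I"
  shows "\<And>lam t \<gamma> M \<epsilon>. 0 \<le> lam \<Longrightarrow> 0 \<le> \<gamma> \<Longrightarrow> 0 \<le> M \<Longrightarrow>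
     (\<And>i. i \<in> I \<Longrightarrow> lam < ratio f g (dd i) \<and> \<gamma> < inner g (dd i) * (ratio f g (dd i) - lam)
        \<and> 1 \<le> M * (ratio f g (dd i) - lam)) \<Longrightarrow> t \<in> T \<Longrightarrow>
     (\<And>s. s \<in> T \<Longrightarrow> inner f s + lam * inner g s \<le> inner f t + lam * inner g t + \<gamma>) \<Longrightarrow> \<epsilon> > 0 \<Longrightarrow>
     \<exists>t'\<in>T. inner g t + (\<Sum>i\<in>I. inner g (dd i)) - \<gamma> * M - \<epsilon> \<le> inner g t'"
proof -
  define mu where "mu i = ratio f g (dd i)" for i
  have fd: "inner f (dd i) = - mu i * inner g (dd i)" if "i \<in> I" for i
    using pos[OF that] by (simp add: mu_def ratio_def field_simps)
  have main: "J \<subseteq> I \<Longrightarrow> \<forall>lam t \<gamma> M \<epsilon>. 0 \<le> lam \<longrightarrow> 0 \<le> \<gamma> \<longrightarrow> 0 \<le> M \<longrightarrow>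
     (\<forall>i\<in>J. lam < mu i \<and> \<gamma> < inner g (dd i) * (mu i - lam) \<and> 1 \<le> M * (mu i - lam)) \<longrightarrow> t \<in> T \<longrightarrow>
     (\<forall>s\<in>T. inner f s + lam * inner g s \<le> inner f t + lam * inner g t + \<gamma>) \<longrightarrow> \<epsilon> > 0 \<longrightarrow>
     (\<exists>t'\<in>T. inner g t + (\<Sum>i\<in>J. inner g (dd i)) - \<gamma> * M - \<epsilon> \<le> inner g t')" for J
  proof -
    assume JI: "J \<subseteq> I"
    hence "finite J" using fin finite_subset by blast
    then show ?thesis using JI
    proof (induction J rule: finite_ranking_induct[where f = "\<lambda>i. - mu i"])
      case empty
      show ?case
      proof (intro allI impI)
        fix lam \<gamma> M \<epsilon> :: real and t
        assume a: "0 \<le> \<gamma>" "0 \<le> M" "t \<in> T" "\<epsilon> > 0"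
        have "0 \<le> \<gamma> * M" using a by simp
        hence "inner g t + (\<Sum>i\<in>{}. inner g (dd i)) - \<gamma> * M - \<epsilon> \<le> inner g t" using a by (simp only: sum.empty)
        with a(3) show "\<exists>t'\<in>T. inner g t + (\<Sum>i\<in>{}. inner g (dd i)) - \<gamma> * M - \<epsilon> \<le> inner g t'"
          by blast
      qed
    next
      case (insert x S)
      show ?case
      proof (cases "x \<in> S")
        case True
        then show ?thesis using insert by (simp add: insert_absorb)
      next
        case xS: False
        have xI: "x \<in> I" and SI: "S \<subseteq> I" using insert.prems by auto
        have gt: "mu y > mu x" if "y \<in> S" for y
        proof -
          have "mu y \<ge> mu x" using insert.hyps(2)[OF that] by simp
          moreover have "mu y \<noteq> mu x"
          proof
            assume "mu y = mu x"
            hence "y = x" using inj xI SI that unfolding mu_def inj_on_def by blast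
            with xS that show False by simp
          qed
          ultimately show ?thesis by simp
        qed
        show ?thesis
        proof (intro allI impI)
          fix lam \<gamma> M \<epsilon> :: real and t
          assume lam0: "0 \<le> lam" and g0: "0 \<le> \<gamma>" and M0: "0 \<le> M"
            and cond: "\<forall>i\<in>insert x S. lam < mu i \<and> \<gamma> < inner g (dd i) * (mu i - lam) \<and> 1 \<le> M * (mu i - lam)"
            and tT: "t \<in> T"
            and tmax: "\<forall>s\<in>T. inner f s + lam * inner g s \<le> inner f t + lam * inner g t + \<gamma>"
            and e0: "\<epsilon> > 0"
          obtain e where e: "e > 0" "\<forall>y\<in>S. e \<le> mu y - mu x"
            using finite_pos_lb[OF insert.hyps(1), of "\<lambda>y. mu y - mu x"] gt by auto
          define s where "s = e / 2"
          define lam' where "lam' = mu x + s"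
          define M' where "M' = 1 / s"
          have s0: "s > 0" using e by (simp add: s_def)
          have cx: "lam < mu x" "\<gamma> < inner g (dd x) * (mu x - lam)" "1 \<le> M * (mu x - lam)"
            using cond by auto
          define L where "L = lam' - lam"
          have L0: "L > 0" using cx s0 by (simp add: L_def lam'_def)
          have gx: "inner g (dd x) > 0" using pos xI by auto
          have Sgap: "\<forall>y\<in>S. s \<le> mu y - lam'" using e by (auto simp: s_def lam'_def)
          have Spos: "\<forall>y\<in>S. inner g (dd y) * (mu y - lam') > 0"
            using Sgap s0 pos SI by (auto intro!: mult_pos_pos)
          obtain e2 where e2: "e2 > 0" "\<forall>y\<in>S. e2 \<le> inner g (dd y) * (mu y - lam')"
            using finite_pos_lb[OF insert.hyps(1), of "\<lambda>y. inner g (dd y) * (mu y - lam')"] Spos by auto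
          define \<epsilon>1 where "\<epsilon>1 = min (min (inner g (dd x) * s / 2) (e2 / 2)) (\<epsilon> / (2 * (1 / L + M')))"
          have M'0: "M' > 0" using s0 by (simp add: M'_def)
          have "1 / L > 0" using L0 by simp
          hence den: "2 * (1 / L + M') > 0" using M'0 by (intro mult_pos_pos add_pos_pos) auto
          have e10: "\<epsilon>1 > 0" using gx s0 e2 e0 den by (simp add: \<epsilon>1_def)
          have e1a: "\<epsilon>1 < inner g (dd x) * s"
          proof -
            have "inner g (dd x) * s > 0" using gx s0 by simp
            moreover have "\<epsilon>1 \<le> inner g (dd x) * s / 2" unfolding \<epsilon>1_def by linarith
            ultimately show ?thesis by linarith
          qed
          have e1b: "\<forall>y\<in>S. \<epsilon>1 < inner g (dd y) * (mu y - lam')"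
          proof
            fix y assume "y \<in> S"
            moreover have "\<epsilon>1 \<le> e2 / 2" unfolding \<epsilon>1_def by linarith
            ultimately show "\<epsilon>1 < inner g (dd y) * (mu y - lam')" using e2 by fastforce
          qed
          have e1c: "\<epsilon>1 * (1 / L + M') \<le> \<epsilon> / 2"
          proof -
            have "\<epsilon>1 \<le> \<epsilon> / (2 * (1 / L + M'))" by (simp add: \<epsilon>1_def)
            hence "\<epsilon>1 * (2 * (1 / L + M')) \<le> \<epsilon>" using den by (simp only: pos_le_divide_eq)
            thus ?thesis by (simp add: algebra_simps)
          qed
          have lam'0: "lam' \<ge> 0" using lam0 cx s0 by (simp add: lam'_def)
          obtain t1 where t1: "t1 \<in> T" "\<forall>s'\<in>T. inner f s' + lam' * inner g s' \<le> inner f t1 + lam' * inner g t1 + \<epsilon>1"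
          proof -
            have "\<And>u. u \<in> T \<Longrightarrow> inner f u + lam' * inner g u \<le> Bf + lam' * Bg"
              using bf bg lam'0 by (meson add_mono mult_left_mono)
            from approx_max[of T "\<lambda>u. inner f u + lam' * inner g u", OF this _ e10] tT that
            show ?thesis by blast
          qed
          have fdx: "inner f (dd x) = - mu x * inner g (dd x)" using fd xI by blast
          have tp: "t + dd x \<in> T"
          proof (rule ccontr)
            assume "t + dd x \<notin> T"
            hence "t - dd x \<in> T" using mv tT xI by blast
            from tmax[rule_format, OF this] have "inner f (t - dd x) + lam * inner g (t - dd x) \<le> inner f t + lam * inner g t + \<gamma>" .
            hence "inner g (dd x) * (mu x - lam) \<le> \<gamma>" using fdx by (simp add: inner_diff_right algebra_simps)
            with cx show False by simp
          qed
          have t1m: "t1 - dd x \<in> T"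
          proof (rule ccontr)
            assume "t1 - dd x \<notin> T"
            hence "t1 + dd x \<in> T" using mv t1 xI by blast
            from t1(2)[rule_format, OF this] have "inner f (t1 + dd x) + lam' * inner g (t1 + dd x) \<le> inner f t1 + lam' * inner g t1 + \<epsilon>1" .
            hence "inner g (dd x) * (lam' - mu x) \<le> \<epsilon>1" using fdx by (simp add: inner_add_right algebra_simps)
            with e1a show False by (simp add: lam'_def)
          qed
          have i1: "inner f (t1 - dd x) + lam * inner g (t1 - dd x) \<le> inner f t + lam * inner g t + \<gamma>"
            using tmax t1m by blast
          have i2: "inner f (t + dd x) + lam' * inner g (t + dd x) \<le> inner f t1 + lam' * inner g t1 + \<epsilon>1"
            using t1 tp by blast
          have "L * (inner g t1 - inner g t - inner g (dd x)) \<ge> - (\<gamma> + \<epsilon>1)"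
            using i1 i2 by (simp add: L_def inner_add_right inner_diff_right algebra_simps)
          hence step: "inner g t1 \<ge> inner g t + inner g (dd x) - (\<gamma> + \<epsilon>1) / L"
            using L0 by (simp add: field_simps)
          have hML: "1 / L \<le> M"
          proof -
            have "M * (mu x - lam) \<le> M * L" using M0 s0 by (intro mult_left_mono) (auto simp: L_def lam'_def)
            hence "1 \<le> M * L" using cx by linarith
            thus ?thesis using L0 by (simp add: field_simps)
          qed
          have gL: "\<gamma> / L \<le> \<gamma> * M" using hML g0 mult_left_mono[OF hML g0] by simp
          have IHc: "\<forall>i\<in>S. lam' < mu i \<and> \<epsilon>1 < inner g (dd i) * (mu i - lam') \<and> 1 \<le> M' * (mu i - lam')"
          proof
            fix i assume iS: "i \<in> S"
            have "s \<le> mu i - lam'" using Sgap iS by blast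
            hence "1 \<le> M' * (mu i - lam')" using s0 by (simp add: M'_def field_simps)
            thus "lam' < mu i \<and> \<epsilon>1 < inner g (dd i) * (mu i - lam') \<and> 1 \<le> M' * (mu i - lam')"
              using \<open>s \<le> mu i - lam'\<close> s0 e1b iS by auto
          qed
          have "\<exists>t2\<in>T. inner g t1 + (\<Sum>i\<in>S. inner g (dd i)) - \<epsilon>1 * M' - \<epsilon> / 2 \<le> inner g t2"
            apply (rule insert.IH[OF SI, rule_format])
            using lam'0 e10 M'0 IHc t1 e0 by auto
          then obtain t2 where t2: "t2 \<in> T" "inner g t1 + (\<Sum>i\<in>S. inner g (dd i)) - \<epsilon>1 * M' - \<epsilon> / 2 \<le> inner g t2"
            by blast
          have sum: "(\<Sum>i\<in>insert x S. inner g (dd i)) = inner g (dd x) + (\<Sum>i\<in>S. inner g (dd i))"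
            using insert.hyps(1) xS by simp
          have "(\<gamma> + \<epsilon>1) / L = \<gamma> / L + \<epsilon>1 * (1 / L)" by (simp add: add_divide_distrib)
          have "inner g t + (\<Sum>i\<in>insert x S. inner g (dd i)) - \<gamma> * M - \<epsilon> \<le> inner g t2"
            using step t2(2) sum gL e1c \<open>(\<gamma> + \<epsilon>1) / L = \<gamma> / L + \<epsilon>1 * (1 / L)\<close>
            by (simp add: algebra_simps)
          with t2(1) show "\<exists>t'\<in>T. inner g t + (\<Sum>i\<in>insert x S. inner g (dd i)) - \<gamma> * M - \<epsilon> \<le> inner g t'" by blast
        qed
      qed
    qed
  qed
  show "\<And>lam t \<gamma> M \<epsilon>. 0 \<le> lam \<Longrightarrow> 0 \<le> \<gamma> \<Longrightarrow> 0 \<le> M \<Longrightarrow>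
     (\<And>i. i \<in> I \<Longrightarrow> lam < ratio f g (dd i) \<and> \<gamma> < inner g (dd i) * (ratio f g (dd i) - lam)
        \<and> 1 \<le> M * (ratio f g (dd i) - lam)) \<Longrightarrow> t \<in> T \<Longrightarrow>
     (\<And>s. s \<in> T \<Longrightarrow> inner f s + lam * inner g s \<le> inner f t + lam * inner g t + \<gamma>) \<Longrightarrow> \<epsilon> > 0 \<Longrightarrow>
     \<exists>t'\<in>T. inner g t + (\<Sum>i\<in>I. inner g (dd i)) - \<gamma> * M - \<epsilon> \<le> inner g t'"
    using main[OF order_refl] unfolding mu_def by (simp add: Ball_def)
qed

lemma generic:
  fixes f0 :: "'a::real_inner"
  assumes "finite R" "0 \<notin> R" "\<delta> > 0"
  shows "\<exists>f. norm (f - f0) < \<delta> \<and> (\<forall>r\<in>R. inner f r \<noteq> 0)"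
  using assms
proof (induction R arbitrary: \<delta> rule: finite_induct)
  case empty
  then show ?case by (intro exI[of _ f0]) simp
next
  case (insert r R)
  have "\<delta> / 2 > 0" using insert by simp
  then obtain f1 where f1: "norm (f1 - f0) < \<delta> / 2" "\<forall>r'\<in>R. inner f1 r' \<noteq> 0"
    using insert.IH insert.prems by blast
  have r0: "r \<noteq> 0" using insert by auto
  define B where "B = insert (- inner f1 r / inner r r) ((\<lambda>r'. - inner f1 r' / inner r r') ` R)"
  have finB: "finite B" using insert by (simp add: B_def)
  define \<eta>0 where "\<eta>0 = \<delta> / (2 * (norm r + 1))"
  have \<eta>0: "\<eta>0 > 0" using insert by (simp add: \<eta>0_def add_pos_nonneg)
  have "infinite {0<..<\<eta>0}" using \<eta>0 by simp
  then obtain \<eta> where \<eta>: "\<eta> \<in> {0<..<\<eta>0}" "\<eta> \<notin> B"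
    using finB by (meson ex_in_conv finite_subset infinite_super subsetI Diff_iff infinite_remove
        Diff_infinite_finite)
  define f where "f = f1 + \<eta> *\<^sub>R r"
  have "norm (f - f0) \<le> norm (f1 - f0) + norm (\<eta> *\<^sub>R r)"
    unfolding f_def by (metis add.commute add_diff_eq norm_triangle_ineq diff_add_eq)
  also have "norm (\<eta> *\<^sub>R r) = \<eta> * norm r" using \<eta> by simp
  also have "\<eta> * norm r \<le> \<eta>0 * (norm r + 1)" using \<eta> by (intro mult_mono) auto
  also have "\<eta>0 * (norm r + 1) = \<delta> / 2"
  proof -
    have "norm r + 1 \<noteq> 0" using norm_ge_zero[of r] by linarith
    thus ?thesis unfolding \<eta>0_def by (simp add: field_simps)
  qed
  finally have nf: "norm (f - f0) < \<delta>" using f1 by linarith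
  have "inner f r' \<noteq> 0" if "r' \<in> insert r R" for r'
  proof
    assume z: "inner f r' = 0"
    hence z': "inner f1 r' + \<eta> * inner r r' = 0" by (simp add: f_def inner_add_left)
    show False
    proof (cases "inner r r' = 0")
      case True
      hence "inner f1 r' = 0" using z' by simp
      moreover have "r' \<in> R" using True that r0 by auto
      ultimately show False using f1 by blast
    next
      case False
      hence "\<eta> = - inner f1 r' / inner r r'" using z' by (simp add: field_simps)
      hence "\<eta> \<in> B" using that by (auto simp: B_def)
      thus False using \<eta> by blast
    qed
  qed
  with nf show ?case by blast
qed

lemma slice_conv:
  fixes C :: "'a::real_inner set"
  assumes "convex C" "x \<in> C" "r > 0" "inner f x > c"
    and sp: "\<forall>y\<in>C. dist y x = r \<longrightarrow> inner f y < c" and "y \<in> C" "inner f y > c"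
  shows "dist y x < r"
proof (rule ccontr)
  assume "\<not> dist y x < r"
  hence d: "dist y x \<ge> r" by simp
  define s where "s = r / dist y x"
  have dpos: "dist y x > 0" using d assms by linarith
  have s01: "0 < s" "s \<le> 1" using d dpos assms by (auto simp: s_def field_simps)
  define z where "z = (1 - s) *\<^sub>R x + s *\<^sub>R y"
  have zC: "z \<in> C" using assms s01 unfolding z_def by (intro convexD) auto
  have "z - x = s *\<^sub>R (y - x)" by (simp add: z_def algebra_simps)
  hence "dist z x = s * dist y x" using s01 by (simp add: dist_norm)
  hence "dist z x = r" using dpos by (simp add: s_def)
  hence "inner f z < c" using sp zC by blast
  moreover have "inner f z = (1 - s) * inner f x + s * inner f y"
    by (simp add: z_def inner_add_right)
  moreover have "(1 - s) * inner f x \<ge> (1 - s) * c" using s01 assms by (intro mult_left_mono) auto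
  moreover have "s * inner f y > s * c" using s01 assms by simp
  ultimately show False by (simp add: algebra_simps)
qed

lemma extreme_sub:
  assumes "x extreme_point_of S" "x \<in> U" "U \<subseteq> S"
  shows "x extreme_point_of U"
  using assms unfolding extreme_point_of_def by blast

lemma slice_fun:
  fixes C :: "'a::euclidean_space set"
  assumes "closed C" "convex C" "x extreme_point_of C" "r > 0"
  shows "\<exists>f0 \<delta>. \<delta> > 0 \<and> (\<forall>f. norm (f - f0) < \<delta> \<longrightarrow>
            (\<exists>c. inner f x > c \<and> (\<forall>y\<in>C. inner f y > c \<longrightarrow> dist y x < r)))"
proof -
  define Sp where "Sp = C \<inter> sphere x r"
  have "compact Sp" unfolding Sp_def using assms by (intro closed_Int_compact) auto
  hence cS: "compact (convex hull Sp)" by (rule compact_convex_hull)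
  have xC: "x \<in> C" using assms extreme_point_of_def by blast
  have "x \<notin> convex hull Sp"
  proof
    assume xin: "x \<in> convex hull Sp"
    have "convex hull Sp \<subseteq> C" using assms by (intro hull_minimal) (auto simp: Sp_def)
    hence "x extreme_point_of (convex hull Sp)" using extreme_sub assms xin by blast
    hence "x \<in> Sp" by (rule extreme_point_of_convex_hull)
    thus False using assms by (simp add: Sp_def)
  qed
  then obtain a b where ab: "inner a x < b" "\<forall>y\<in>convex hull Sp. inner a y > b"
    using separating_hyperplane_closed_point[of "convex hull Sp" x] cS
    by (auto simp: compact_imp_closed)
  define f0 where "f0 = - a"
  define m where "m = inner f0 x + b"
  have m0: "m > 0" using ab by (simp add: m_def f0_def)
  define \<delta> where "\<delta> = m / (2 * norm x + r + 1)"
  have den: "2 * norm x + r + 1 > 0" using assms(4) norm_ge_zero[of x] by linarith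
  have \<delta>0: "\<delta> > 0" using m0 den by (simp add: \<delta>_def)
  have "\<exists>c. inner f x > c \<and> (\<forall>y\<in>C. inner f y > c \<longrightarrow> dist y x < r)" if nf: "norm (f - f0) < \<delta>" for f
  proof -
    define e where "e = f - f0"
    define c where "c = - b + norm e * (norm x + r)"
    have sp: "\<forall>y\<in>C. dist y x = r \<longrightarrow> inner f y < c"
    proof (intro ballI impI)
      fix y assume "y \<in> C" "dist y x = r"
      hence ySp: "y \<in> Sp" by (simp add: Sp_def dist_commute)
      hence "inner f0 y < - b" using ab hull_subset[of Sp convex] by (auto simp: f0_def)
      moreover have "norm y \<le> norm x + r"
        using \<open>dist y x = r\<close> norm_triangle_ineq2[of y x] by (simp add: dist_norm)
      moreover have "inner e y \<le> norm e * norm y" using norm_cauchy_schwarz[of e y] by simp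
      moreover have "norm e * norm y \<le> norm e * (norm x + r)" using calculation(2) by (intro mult_left_mono) auto
      moreover have "inner f y = inner f0 y + inner e y" by (simp add: e_def inner_diff_left)
      ultimately show "inner f y < c" unfolding c_def by linarith
    qed
    have "- inner e x \<le> norm e * norm x"
      using norm_cauchy_schwarz[of "-e" x] by simp
    moreover have "inner f x = inner f0 x + inner e x" by (simp add: e_def inner_diff_left)
    moreover have "norm e * (2 * norm x + r + 1) < m"
      using nf den by (simp add: e_def \<delta>_def pos_less_divide_eq)
    moreover have "norm e * (2 * norm x + r) \<le> norm e * (2 * norm x + r + 1)"
      by (intro mult_left_mono) auto
    moreover have "norm e * (2 * norm x + r + 1) = 2 * (norm e * norm x) + norm e * r + norm e"
      by (simp add: algebra_simps)
    moreover have "c = - b + norm e * norm x + norm e * r" by (simp add: c_def algebra_simps)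
    ultimately have "inner f x > c" unfolding m_def using norm_ge_zero[of e] by linarith
    moreover have "\<forall>y\<in>C. inner f y > c \<longrightarrow> dist y x < r"
      using slice_conv[OF assms(2) xC assms(4) \<open>inner f x > c\<close> sp] by blast
    ultimately show ?thesis by blast
  qed
  with \<delta>0 show ?thesis by blast
qed

theorem theorem1p3:
  fixes V T :: "(real ^ 'n) set" and x :: "real ^ 'n"
  assumes "CARD('n) \<ge> 2"
    and "finite V"
    and "\<forall>u\<in>V. \<forall>v\<in>V. u \<noteq> v \<longrightarrow> \<not> parallel u v"
    and "closed T"
    and "V_closed V T"
    and "x extreme_point_of (closure (convex hull T))"
  shows "\<exists>t::real ^ 'n. x \<in> (\<lambda>p. t + p) ` subset_sums V
           \<and> (\<lambda>p. t + p) ` subset_sums V \<subseteq> closure (convex hull T)"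
proof -
  define C where "C = closure (convex hull T)"
  have cC: "closed C" "convex C" by (simp_all add: C_def convex_closure)
  have TC: "T \<subseteq> C" unfolding C_def using hull_subset[of T convex] closure_subset by blast
  have ext: "x extreme_point_of C" using assms(6) C_def by simp
  have xC: "x \<in> C" using ext extreme_point_of_def by blast
  have xT: "x \<in> T"
  proof (rule ccontr)
    assume "x \<notin> T"
    then obtain r where r: "r > 0" "\<forall>y. dist y x < r \<longrightarrow> y \<in> - T"
      using assms(4) unfolding closed_def open_dist by auto
    obtain f0 \<delta> where f0: "\<delta> > 0" "\<forall>f. norm (f - f0) < \<delta> \<longrightarrow>
            (\<exists>c. inner f x > c \<and> (\<forall>y\<in>C. inner f y > c \<longrightarrow> dist y x < r))"
      using slice_fun[OF cC ext r(1)] by blast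
    then obtain c where c: "inner f0 x > c" "\<forall>y\<in>C. inner f0 y > c \<longrightarrow> dist y x < r"
      by force
    have "T \<subseteq> {y. inner f0 y \<le> c}" using c r TC by force
    hence "C \<subseteq> {y. inner f0 y \<le> c}" unfolding C_def
      by (intro closure_minimal hull_minimal) (auto simp: closed_halfspace_le convex_halfspace_le)
    with xC c show False by auto
  qed
  define d where "d v = (if x + v \<in> T then v else - v)" for v
  have xd: "x + d v \<in> T" if "v \<in> V" for v
    using assms(5) xT that unfolding V_closed_def d_def by auto
  have mv: "t + d v \<in> T \<or> t - d v \<in> T" if "t \<in> T" "v \<in> V" for t v
    using assms(5) that unfolding V_closed_def d_def by auto
  have key: "x + (\<Sum>v\<in>W. d v) \<in> C" if WV: "W \<subseteq> V" for W
  proof (rule ccontr)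
    define p where "p = x + (\<Sum>v\<in>W. d v)"
    assume "x + (\<Sum>v\<in>W. d v) \<notin> C"
    hence pn: "p \<notin> C" by (simp add: p_def)
    obtain a b where ab: "inner a p < b" "\<forall>y\<in>C. inner a y > b"
      using separating_hyperplane_closed_point[OF cC(2) cC(1) pn] by blast
    define g where "g = - a"
    have gT: "inner g t < - b" if "t \<in> T" for t using ab TC that by (force simp: g_def)
    have gp: "inner g p > - b" using ab by (simp add: g_def)
    define Wp where "Wp = {v \<in> W. inner g (d v) > 0}"
    have finW: "finite W" using WV assms(2) finite_subset by blast
    have finWp: "finite Wp" using finW by (simp add: Wp_def)
    have WpV: "Wp \<subseteq> V" using WV by (auto simp: Wp_def)
    define G where "G = (\<Sum>v\<in>Wp. inner g (d v))"
    have gpG: "inner g p \<le> inner g x + G"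
    proof -
      have "inner g p = inner g x + (\<Sum>v\<in>W. inner g (d v))"
        by (simp add: p_def inner_add_right inner_sum_right)
      also have "(\<Sum>v\<in>W. inner g (d v)) = G + (\<Sum>v\<in>W - Wp. inner g (d v))"
        unfolding G_def using finW by (metis (no_types, lifting) Wp_def mem_Collect_eq subsetI sum.subset_diff add.commute)
      also have "(\<Sum>v\<in>W - Wp. inner g (d v)) \<le> 0"
        by (intro sum_nonpos) (auto simp: Wp_def)
      finally show ?thesis by simp
    qed
    have approx: "\<exists>t\<in>T. inner g x + G - \<epsilon> \<le> inner g t" if e0: "\<epsilon> > 0" for \<epsilon>
    proof -
      have G0: "G \<ge> 0" unfolding G_def by (intro sum_nonneg) (auto simp: Wp_def)
      have gle: "inner g (d v) \<le> G" if "v \<in> Wp" for v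
        unfolding G_def using finWp that by (intro member_le_sum) (auto simp: Wp_def)
      have gpos: "inner g (d v) > 0" if "v \<in> Wp" for v using that by (simp add: Wp_def)
      have dnz: "norm (d v) > 0" if "v \<in> Wp" for v using gpos[OF that] by auto
      obtain r1 where r1: "r1 > 0" "\<forall>v\<in>Wp. r1 \<le> norm (d v)"
        using finite_pos_lb[OF finWp, of "\<lambda>v. norm (d v)"] dnz by blast
      define r where "r = min r1 (\<epsilon> / (4 * (norm g + 1)))"
      have ng: "norm g + 1 > 0" using norm_ge_zero[of g] by linarith
      have r0: "r > 0" using r1 e0 ng by (simp add: r_def)
      have rg: "norm g * r \<le> \<epsilon> / 4"
      proof -
        have "r \<le> \<epsilon> / (4 * (norm g + 1))" by (simp add: r_def)
        hence "r * (4 * (norm g + 1)) \<le> \<epsilon>" using ng by (simp add: pos_le_divide_eq)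
        hence "4 * (norm g * r) + 4 * r \<le> \<epsilon>" by (simp add: algebra_simps)
        thus ?thesis using r0 by linarith
      qed
      obtain f0 \<delta> where f0: "\<delta> > 0" "\<forall>f. norm (f - f0) < \<delta> \<longrightarrow>
            (\<exists>c. inner f x > c \<and> (\<forall>y\<in>C. inner f y > c \<longrightarrow> dist y x < r))"
        using slice_fun[OF cC ext r0] by blast
      define R where "R = (\<lambda>(v, w). inner g (d w) *\<^sub>R d v - inner g (d v) *\<^sub>R d w) ` {(v, w). v \<in> Wp \<and> w \<in> Wp \<and> v \<noteq> w}"
      have finR: "finite R"
      proof -
        have "{(v, w). v \<in> Wp \<and> w \<in> Wp \<and> v \<noteq> w} \<subseteq> Wp \<times> Wp" by auto
        hence "finite {(v, w). v \<in> Wp \<and> w \<in> Wp \<and> v \<noteq> w}" using finWp finite_subset by blast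
        thus ?thesis unfolding R_def by simp
      qed
      have sgn1: "\<exists>s. v = s *\<^sub>R d v" for v
        by (cases "x + v \<in> T") (auto simp: d_def intro: exI[of _ 1] exI[of _ "-1"])
      have sgn2: "\<exists>s. d w = s *\<^sub>R w" for w
        by (cases "x + w \<in> T") (auto simp: d_def intro: exI[of _ 1] exI[of _ "-1"])
      have R0: "0 \<notin> R"
      proof
        assume "0 \<in> R"
        then obtain v w where vw: "v \<in> Wp" "w \<in> Wp" "v \<noteq> w"
          and z: "inner g (d w) *\<^sub>R d v - inner g (d v) *\<^sub>R d w = 0"
          unfolding R_def by auto
        have zz: "inner g (d w) *\<^sub>R d v = inner g (d v) *\<^sub>R d w" using z by simp
        have "d v = inverse (inner g (d w)) *\<^sub>R (inner g (d w) *\<^sub>R d v)"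
          using gpos[OF vw(2)] by simp
        also have "\<dots> = (inner g (d v) / inner g (d w)) *\<^sub>R d w"
          unfolding zz by (simp add: divide_inverse mult.commute)
        finally have dvk: "d v = (inner g (d v) / inner g (d w)) *\<^sub>R d w" .
        obtain s1 where sv: "v = s1 *\<^sub>R d v" using sgn1 by blast
        obtain s2 where dws: "d w = s2 *\<^sub>R w" using sgn2 by blast
        define k where "k = inner g (d v) / inner g (d w)"
        have "v = s1 *\<^sub>R d v" by (rule sv)
        also have "\<dots> = s1 *\<^sub>R (k *\<^sub>R d w)" using dvk by (simp add: k_def)
        also have "\<dots> = s1 *\<^sub>R (k *\<^sub>R (s2 *\<^sub>R w))" using dws by simp
        also have "\<dots> = (s1 * k * s2) *\<^sub>R w" by (simp add: mult.assoc)
        finally have "v = (s1 * k * s2) *\<^sub>R w" .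
        hence "parallel v w" unfolding parallel_def by blast
        moreover have "v \<in> V" "w \<in> V" using vw WpV by auto
        ultimately show False using assms(3) vw(3) by blast
      qed
      obtain f where f: "norm (f - f0) < \<delta>" "\<forall>\<rho>\<in>R. inner f \<rho> \<noteq> 0"
        using generic[OF finR R0 f0(1)] by blast
      obtain c where c: "inner f x > c" "\<forall>y\<in>C. inner f y > c \<longrightarrow> dist y x < r"
        using f0(2) f(1) by blast
      define \<kappa> where "\<kappa> = inner f x - c"
      have k0: "\<kappa> > 0" using c by (simp add: \<kappa>_def)
      have fT: "inner f t \<le> inner f x + norm f * r" if "t \<in> T" for t
      proof (cases "inner f t > c")
        case True
        hence "dist t x < r" using c TC that by blast
        moreover have "inner f (t - x) \<le> norm f * norm (t - x)" using norm_cauchy_schwarz[of f "t - x"] by simp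
        moreover have "norm f * norm (t - x) \<le> norm f * r" using calculation(1)
          by (intro mult_left_mono) (auto simp: dist_norm)
        ultimately show ?thesis by (simp add: inner_diff_right)
      next
        case False
        have "norm f * r \<ge> 0" using r0 by simp
        thus ?thesis using c(1) False by linarith
      qed
      have fd: "inner f (d v) \<le> - \<kappa>" if "v \<in> Wp" for v
      proof -
        have "x + d v \<in> C" using xd WpV that TC by blast
        moreover have "dist (x + d v) x \<ge> r" using r1 that by (auto simp: dist_norm r_def)
        ultimately have "\<not> inner f (x + d v) > c" using c by force
        thus ?thesis by (simp add: \<kappa>_def inner_add_right)
      qed
      have rat: "inner g (d v) * ratio f g (d v) = - inner f (d v)" if "v \<in> Wp" for v
        using gpos[OF that] by (simp add: ratio_def)
      have inj: "inj_on (\<lambda>v. ratio f g (d v)) Wp"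
      proof (rule inj_onI)
        fix v w assume vw: "v \<in> Wp" "w \<in> Wp" "ratio f g (d v) = ratio f g (d w)"
        show "v = w"
        proof (rule ccontr)
          assume "v \<noteq> w"
          hence "inner g (d w) *\<^sub>R d v - inner g (d v) *\<^sub>R d w \<in> R" using vw unfolding R_def by force
          hence ne: "inner g (d w) * inner f (d v) - inner g (d v) * inner f (d w) \<noteq> 0"
            using f(2) by (force simp: inner_diff_right)
          have "inner f (d v) * inner g (d w) = inner f (d w) * inner g (d v)"
            using vw(3) gpos[OF vw(1)] gpos[OF vw(2)] by (simp add: ratio_def field_simps)
          with ne show False by (simp add: algebra_simps)
        qed
      qed
      define \<gamma> where "\<gamma> = min (\<kappa> / 2) (\<epsilon> * \<kappa> / (4 * (G + 1)))"
      define M where "M = (G + 1) / \<kappa>"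
      have G1: "G + 1 > 0" using G0 by simp
      have ga0: "\<gamma> > 0" using k0 e0 G1 by (simp add: \<gamma>_def)
      have gak: "\<gamma> < \<kappa>" using k0 by (simp add: \<gamma>_def)
      have M0: "M \<ge> 0" using G1 k0 by (simp add: M_def)
      have gM: "\<gamma> * M \<le> \<epsilon> / 4"
      proof -
        have "\<gamma> \<le> \<epsilon> * \<kappa> / (4 * (G + 1))" by (simp add: \<gamma>_def)
        hence h1: "\<gamma> * (4 * (G + 1)) \<le> \<epsilon> * \<kappa>" using G1 by (simp add: pos_le_divide_eq)
        have "\<gamma> * M = (\<gamma> * (G + 1)) / \<kappa>" by (simp add: M_def)
        also have "\<dots> \<le> \<epsilon> / 4" using h1 k0 by (simp add: divide_le_eq algebra_simps)
        finally show ?thesis .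
      qed
      obtain t0 where t0: "t0 \<in> T" "\<forall>s\<in>T. inner f s \<le> inner f t0 + \<gamma>"
        using approx_max[of T "\<lambda>s. inner f s", OF fT _ ga0] xT by blast
      have "inner f t0 > c" using t0(2) xT gak by (force simp: \<kappa>_def)
      hence "dist t0 x < r" using c TC t0(1) by blast
      hence "inner g (x - t0) \<le> norm g * r"
        using norm_cauchy_schwarz[of g "x - t0"] mult_left_mono[of "norm (x - t0)" r "norm g"]
        by (simp add: dist_norm norm_minus_commute)
      hence gt0: "inner g t0 \<ge> inner g x - \<epsilon> / 4" using rg by (simp add: inner_diff_right)
      have cond: "0 < ratio f g (d i) \<and> \<gamma> < inner g (d i) * (ratio f g (d i) - 0) \<and> 1 \<le> M * (ratio f g (d i) - 0)"
        if i: "i \<in> Wp" for i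
      proof -
        have A: "inner g (d i) * ratio f g (d i) \<ge> \<kappa>" using rat[OF i] fd[OF i] by simp
        have gi: "inner g (d i) > 0" using gpos[OF i] .
        have pr: "ratio f g (d i) > 0" 
        proof -
          have "inner g (d i) * ratio f g (d i) > 0" using A k0 by linarith
          thus ?thesis using gi by (simp add: zero_less_mult_iff)
        qed
        have "\<kappa> * inner g (d i) \<le> \<kappa> * (G + 1)" using gle[OF i] k0 by simp
        also have "\<dots> \<le> (G + 1) * (inner g (d i) * ratio f g (d i))" using A G1 by (simp add: mult_left_mono mult.commute)
        finally have "\<kappa> * inner g (d i) \<le> (G + 1) * (inner g (d i) * ratio f g (d i))" .
        hence "inner g (d i) * \<kappa> \<le> inner g (d i) * ((G + 1) * ratio f g (d i))"
          by (simp add: algebra_simps)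
        hence "\<kappa> \<le> (G + 1) * ratio f g (d i)" using gi by (simp only: mult_le_cancel_left_pos)
        hence "1 \<le> M * ratio f g (d i)" using k0 by (simp add: M_def field_simps)
        thus ?thesis using pr A gak by simp
      qed
      have "\<exists>t'\<in>T. inner g t0 + (\<Sum>i\<in>Wp. inner g (d i)) - \<gamma> * M - \<epsilon> / 4 \<le> inner g t'"
      proof -
        have mvW: "\<And>t i. t \<in> T \<Longrightarrow> i \<in> Wp \<Longrightarrow> t + d i \<in> T \<or> t - d i \<in> T"
          using mv WpV by blast
        have gTle: "\<And>t. t \<in> T \<Longrightarrow> inner g t \<le> - b" using gT less_imp_le by blast
        have c2: "\<And>i. i \<in> Wp \<Longrightarrow> 0 < ratio f g (d i) \<and> \<gamma> < inner g (d i) * (ratio f g (d i) - 0) \<and> 1 \<le> M * (ratio f g (d i) - 0)"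
          using cond by blast
        have t0m: "\<And>s. s \<in> T \<Longrightarrow> inner f s + 0 * inner g s \<le> inner f t0 + 0 * inner g t0 + \<gamma>"
          using t0(2) by simp
        have e4: "\<epsilon> / 4 > 0" using e0 by simp
        show ?thesis
          by (rule param[OF finWp mvW fT gTle gpos inj order_refl less_imp_le[OF ga0] M0 c2 t0(1) t0m e4])
      qed
      then obtain t' where t': "t' \<in> T" "inner g t0 + (\<Sum>i\<in>Wp. inner g (d i)) - \<gamma> * M - \<epsilon> / 4 \<le> inner g t'"
        by blast
      have sG: "(\<Sum>i\<in>Wp. inner g (d i)) = G" by (simp add: G_def)
      have "inner g x + G - \<epsilon> \<le> inner g t'" using t'(2) gt0 gM e0 unfolding sG by linarith
      with t'(1) show ?thesis by blast
    qed
    have "inner g p + b > 0" using gp by simp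
    from approx[OF this] obtain t where "t \<in> T" "inner g x + G - (inner g p + b) \<le> inner g t" by blast
    with gpG gT[OF \<open>t \<in> T\<close>] show False by linarith
  qed
  define N where "N = {v \<in> V. x + v \<notin> T}"
  define t where "t = x - (\<Sum>v\<in>N. v)"
  have finN: "finite N" using assms(2) by (simp add: N_def)
  have NV: "N \<subseteq> V" by (auto simp: N_def)
  have dN: "d v = - v" if "v \<in> N" for v using that by (simp add: N_def d_def)
  have dV: "d v = v" if "v \<in> V" "v \<notin> N" for v using that by (simp add: N_def d_def)
  have "x \<in> (\<lambda>p. t + p) ` subset_sums V"
    unfolding subset_sums_def t_def using NV by (auto simp: image_iff)
  moreover have "(\<lambda>p. t + p) ` subset_sums V \<subseteq> C"
  proof
    fix y assume "y \<in> (\<lambda>p. t + p) ` subset_sums V"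
    then obtain W where WV: "W \<subseteq> V" and y: "y = t + (\<Sum>v\<in>W. v)"
      unfolding subset_sums_def by auto
    have finW: "finite W" using WV assms(2) finite_subset by blast
    define W' where "W' = (W - N) \<union> (N - W)"
    have W'V: "W' \<subseteq> V" using WV NV by (auto simp: W'_def)
    have "(\<Sum>v\<in>W'. d v) = (\<Sum>v\<in>W - N. d v) + (\<Sum>v\<in>N - W. d v)"
      unfolding W'_def using finW finN by (intro sum.union_disjoint) auto
    also have "(\<Sum>v\<in>W - N. d v) = (\<Sum>v\<in>W - N. v)" using WV by (intro sum.cong) (auto intro: dV)
    also have "(\<Sum>v\<in>N - W. d v) = (\<Sum>v\<in>N - W. - v)" by (intro sum.cong) (auto intro: dN)
    finally have s1: "(\<Sum>v\<in>W'. d v) = (\<Sum>v\<in>W - N. v) - (\<Sum>v\<in>N - W. v)"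
      by (simp add: sum_negf)
    have s2: "(\<Sum>v\<in>N. v) = (\<Sum>v\<in>W \<inter> N. v) + (\<Sum>v\<in>N - W. v)"
      using sum.Int_Diff[OF finN, of "\<lambda>v. v" W] by (simp add: Int_commute)
    have s3: "(\<Sum>v\<in>W. v) = (\<Sum>v\<in>W \<inter> N. v) + (\<Sum>v\<in>W - N. v)"
      using sum.Int_Diff[OF finW, of "\<lambda>v. v" N] by simp
    have "y = x + (\<Sum>v\<in>W'. d v)" unfolding y t_def s1 using s2 s3 by (simp add: algebra_simps)
    thus "y \<in> C" using key[OF W'V] by simp
  qed
  ultimately show ?thesis unfolding C_def by blast
qed

end
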